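(* Let $n\ge1$ and let $\mathcal{S}(\vec u,\vec v,\vec a,\vec d)$ be the lexicographic-order specification over $n$ variables defined below, with order constraint $\mathcal{O}(\vec d)=\{d_n\ge1\}$. Then there is a cutting planes derivation of size $O(n)$ of $f_n\ge1$ from $\mathcal{S}(\vec x,\vec y,\vec a,\vec d)\cup\{d_n\ge1\}\cup\mathcal{S}(\vec y,\vec z,\vec b,\vec e)\cup\{e_n\ge1\}\cup\mathcal{S}(\vec x,\vec z,\vec c,\vec f)$, where $\vec x,\vec y,\vec z$ are disjoint lists of $n$ variables and $(\vec a,\vec d),(\vec b,\vec e),(\vec c,\vec f)$ are disjoint lists of fresh auxiliary variables. That is, transitivity of the order can be proved by a cutting planes derivation of size $O(n)$.
   Context: Literals are $x$ or $\bar x=1-x$; a PB constraint is $\sum_i c_i\ell_i\ge A$. The specification $\mathcal{S}(\vec u,\vec v,\vec a,\vec d)$ (variables $u_1..u_n$, $v_1..v_n$, $a_1..a_{n-1}$, $d_1..d_n$) consists of: $\bar a_1+u_1+\bar v_1\ge1$; $2a_1+\bar u_1+v_1\ge2$; for $1\le i\le n-2$: $3\bar a_{i+1}+2a_i+u_{i+1}+\bar v_{i+1}\ge3$ and $2a_{i+1}+2\bar a_i+\bar u_{i+1}+v_{i+1}\ge2$; $\bar d_1+v_1+\bar u_1\ge1$; $2d_1+\bar v_1+u_1\ge2$; for $1\le i\le n-1$: $4\bar d_{i+1}+3d_i+\bar a_i+v_{i+1}+\bar u_{i+1}\ge4$ and $4d_{i+1}+3\bar d_i+a_i+\bar v_{i+1}+u_{i+1}\ge3$.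 $\mathcal{S}(\vec x,\vec y,\vec a,\vec d)$ denotes substitution of $\vec x,\vec y$ (and the given auxiliary lists) for $\vec u,\vec v$ (and $\vec a,\vec d$). Cutting planes derivation: a sequence of constraints, each a premise, a literal axiom $\ell\ge0$, or obtained from earlier ones by addition, multiplication by a positive integer, division by a positive integer with rounding up of coefficients and degree, or saturation ($\sum c_i\ell_i\ge A\mapsto\sum\min(c_i,A)\ell_i\ge A$), with weakening (adding literal axioms to eliminate a term) as derived rule. The size of a derivation is the total size of the constraints in it. *)

theory Defs
  imports Main
begin

datatype 'v lit = Pos 'v | Neg 'v   \<comment> \<open>Pos x is x, Neg x is the negated literal 1 - x\<close>

text \<open>A PB constraint written as a list of (coefficient, literal) terms and a degree:
  sum_i c_i l_i >= A.\<close>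
type_synonym 'v pbc = "(int \<times> 'v lit) list \<times> int"

text \<open>A constraint is kept in the canonical form sum_v L(v) x_v >= R over variables
  (integer coefficients, finite support).  It corresponds to the normalised literal form
  in which a variable v with L(v) > 0 occurs as the literal v with coefficient L(v), a
  variable with L(v) < 0 occurs as the negated literal with coefficient -L(v), and the
  degree is R + sum of the -L(v) over L(v) < 0 (using negated-x = 1 - x).\<close>
datatype 'v cons = Cons (lhs: "'v \<Rightarrow> int") (rhs: int)

definition lit_coeff :: "'v \<Rightarrow> int \<times> 'v lit \<Rightarrow> int" where
  "lit_coeff v t = (case snd t of Pos w \<Rightarrow> (if w = v then fst t else 0)
                                | Neg w \<Rightarrow> (if w = v then - fst t else 0))"

definition neg_const :: "int \<times> 'v lit \<Rightarrow> int" where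
  "neg_const t = (case snd t of Neg _ \<Rightarrow> fst t | Pos _ \<Rightarrow> 0)"

definition to_cons :: "'v pbc \<Rightarrow> 'v cons" where
  "to_cons p = Cons (\<lambda>v. sum_list (map (lit_coeff v) (fst p)))
                    (snd p - sum_list (map neg_const (fst p)))"

definition degree :: "'v cons \<Rightarrow> int" where
  "degree c = rhs c + (\<Sum>v\<in>{v. lhs c v < 0}. - lhs c v)"

definition cdiv :: "int \<Rightarrow> int \<Rightarrow> int" where  \<comment> \<open>ceiling of a / d for d > 0\<close>
  "cdiv a d = - ((- a) div d)"

definition cp_add :: "'v cons \<Rightarrow> 'v cons \<Rightarrow> 'v cons" where
  "cp_add c1 c2 = Cons (\<lambda>v. lhs c1 v + lhs c2 v) (rhs c1 + rhs c2)"

definition cp_mult :: "int \<Rightarrow> 'v cons \<Rightarrow> 'v cons" where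
  "cp_mult k c = Cons (\<lambda>v. k * lhs c v) (k * rhs c)"

text \<open>Rebuild a canonical constraint from literal coefficients (with sign recording polarity)
  and a literal-form degree.\<close>
definition from_lits :: "('v \<Rightarrow> int) \<Rightarrow> int \<Rightarrow> 'v cons" where
  "from_lits L A = Cons L (A - (\<Sum>v\<in>{v. L v < 0}. - L v))"

definition cp_div :: "int \<Rightarrow> 'v cons \<Rightarrow> 'v cons" where
  "cp_div d c = from_lits (\<lambda>v. sgn (lhs c v) * cdiv \<bar>lhs c v\<bar> d) (cdiv (degree c) d)"

text \<open>Saturation: each literal coefficient c_i replaced by min(c_i, A)
  (with A replaced by 0 when the degree is negative, where the constraint is trivial).\<close>
definition cp_sat :: "'v cons \<Rightarrow> 'v cons" where
  "cp_sat c = from_lits (\<lambda>v. sgn (lhs c v) * min \<bar>lhs c v\<bar> (max (degree c) 0)) (degree c)"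

definition lit_axiom :: "'v lit \<Rightarrow> 'v cons" where
  "lit_axiom l = to_cons ([(1, l)], 0)"

definition cp_step :: "'v pbc set \<Rightarrow> 'v cons list \<Rightarrow> 'v cons \<Rightarrow> bool" where
  "cp_step \<Gamma> prev c \<longleftrightarrow>
     (\<exists>p\<in>\<Gamma>. c = to_cons p)
   \<or> (\<exists>l. c = lit_axiom l)
   \<or> (\<exists>c1\<in>set prev. \<exists>c2\<in>set prev. c = cp_add c1 c2)
   \<or> (\<exists>c1\<in>set prev. \<exists>k>0. c = cp_mult k c1)
   \<or> (\<exists>c1\<in>set prev. \<exists>d>0. c = cp_div d c1)
   \<or> (\<exists>c1\<in>set prev. c = cp_sat c1)"

definition cp_derivation :: "'v pbc set \<Rightarrow> 'v cons list \<Rightarrow> bool" where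
  "cp_derivation \<Gamma> \<pi> \<longleftrightarrow> (\<forall>i<length \<pi>. cp_step \<Gamma> (take i \<pi>) (\<pi> ! i))"

fun bitsize :: "nat \<Rightarrow> nat" where
  "bitsize m = (if m < 2 then 1 else Suc (bitsize (m div 2)))"

definition cons_size :: "'v cons \<Rightarrow> nat" where
  "cons_size c = (\<Sum>v\<in>{v. lhs c v \<noteq> 0}. bitsize (nat \<bar>lhs c v\<bar>)) + bitsize (nat \<bar>degree c\<bar>)"

definition deriv_size :: "'v cons list \<Rightarrow> nat" where
  "deriv_size \<pi> = sum_list (map cons_size \<pi>)"

section \<open>The lexicographic-order specification S(u,v,a,d) over n variables (indices from 1)\<close>

definition spec :: "nat \<Rightarrow> (nat \<Rightarrow> 'v) \<Rightarrow> (nat \<Rightarrow> 'v) \<Rightarrow> (nat \<Rightarrow> 'v) \<Rightarrow> (nat \<Rightarrow> 'v) \<Rightarrow> 'v pbc set" where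
  "spec n u v a d =
     (if 2 \<le> n then
        {([(1, Neg (a 1)), (1, Pos (u 1)), (1, Neg (v 1))], 1),
         ([(2, Pos (a 1)), (1, Neg (u 1)), (1, Pos (v 1))], 2)}
      else {})
   \<union> {([(3, Neg (a (i+1))), (2, Pos (a i)), (1, Pos (u (i+1))), (1, Neg (v (i+1)))], 3)
       | i. 1 \<le> i \<and> i \<le> n - 2}
   \<union> {([(2, Pos (a (i+1))), (2, Neg (a i)), (1, Neg (u (i+1))), (1, Pos (v (i+1)))], 2)
       | i. 1 \<le> i \<and> i \<le> n - 2}
   \<union> {([(1, Neg (d 1)), (1, Pos (v 1)), (1, Neg (u 1))], 1),
      ([(2, Pos (d 1)), (1, Neg (v 1)), (1, Pos (u 1))], 2)}
   \<union> {([(4, Neg (d (i+1))), (3, Pos (d i)), (1, Neg (a i)), (1, Pos (v (i+1))), (1, Neg (u (i+1)))], 4)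
       | i. 1 \<le> i \<and> i \<le> n - 1}
   \<union> {([(4, Pos (d (i+1))), (3, Neg (d i)), (1, Pos (a i)), (1, Neg (v (i+1))), (1, Pos (u (i+1)))], 3)
       | i. 1 \<le> i \<and> i \<le> n - 1}"

datatype var = X nat | Y nat | Z nat | VA nat | VB nat | VC nat | VD nat | VE nat | VF nat

definition unit_pbc :: "'v \<Rightarrow> 'v pbc" where
  "unit_pbc x = ([(1, Pos x)], 1)"

definition trans_premises :: "nat \<Rightarrow> var pbc set" where
  "trans_premises n =
     spec n X Y VA VD \<union> {unit_pbc (VD n)} \<union>
     spec n Y Z VB VE \<union> {unit_pbc (VE n)} \<union>
     spec n X Z VC VF"

end

theory Submission
  imports Defs
begin
definition lc :: "(int \<times> 'v) list \<Rightarrow> 'v \<Rightarrow> int" where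
  "lc xs v = sum_list (map (\<lambda>(c,w). if w = v then c else 0) xs)"

lemma lc_Nil[simp]: "lc [] v = 0" by (simp add: lc_def)
lemma lc_Cons[simp]: "lc ((c,w)#xs) v = (if w = v then c else 0) + lc xs v" by (simp add: lc_def)
lemma lc_append[simp]: "lc (xs @ ys) v = lc xs v + lc ys v" by (simp add: lc_def)

definition RR :: "(int \<times> 'v) list \<Rightarrow> int \<Rightarrow> 'v cons" where "RR xs r = Cons (lc xs) r"

fun tr :: "int \<times> 'v lit \<Rightarrow> int \<times> 'v" where
  "tr (c, Pos w) = (c, w)" | "tr (c, Neg w) = (-c, w)"

lemma neg_const_simps[simp]: "neg_const (c, Neg w) = c" "neg_const (c, Pos w) = 0"
  by (simp_all add: neg_const_def)

lemma lit_coeff_tr: "sum_list (map (lit_coeff v) ts) = lc (map tr ts) v"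
proof (induction ts)
  case Nil then show ?case by simp
next
  case (Cons t ts)
  obtain c l where t: "t = (c,l)" by (cases t)
  show ?case using Cons by (cases l) (auto simp: t lit_coeff_def)
qed

lemma to_cons_RR: "to_cons (ts, A) = RR (map tr ts) (A - sum_list (map neg_const ts))"
  by (simp add: to_cons_def RR_def lit_coeff_tr)

lemma add_RR[simp]: "cp_add (RR xs r) (RR ys s) = RR (xs @ ys) (r+s)"
  by (simp add: cp_add_def RR_def fun_eq_iff)

lemma lc_mult: "lc (map (\<lambda>(c,w). (k*c, w)) xs) v = k * lc xs v"
  by (induction xs) (auto simp: algebra_simps)

lemma mult_RR[simp]: "cp_mult k (RR xs r) = RR (map (\<lambda>(c,w). (k*c, w)) xs) (k*r)"
  by (simp add: cp_mult_def RR_def lc_mult fun_eq_iff)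

fun ins :: "int \<times> 'v \<Rightarrow> (int \<times> 'v) list \<Rightarrow> (int \<times> 'v) list" where
  "ins (c,v) [] = [(c,v)]"
| "ins (c,v) ((d,w)#ys) = (if v = w then (c+d, w)#ys else (d,w) # ins (c,v) ys)"

definition nrm :: "(int \<times> 'v) list \<Rightarrow> (int \<times> 'v) list" where
  "nrm xs = filter (\<lambda>(c,w). c \<noteq> 0) (foldr ins xs [])"

lemma lc_ins: "lc (ins (c,v) ys) u = lc ((c,v)#ys) u"
  by (induction "(c,v)" ys rule: ins.induct) auto

lemma snd_ins: "snd ` set (ins (c,v) ys) = insert v (snd ` set ys)"
  by (induction "(c,v)" ys rule: ins.induct) auto

lemma distinct_ins: "distinct (map snd ys) \<Longrightarrow> distinct (map snd (ins (c,v) ys))"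
  by (induction "(c,v)" ys rule: ins.induct) (auto simp: snd_ins)

lemma lc_foldr: "lc (foldr ins xs ys) u = lc xs u + lc ys u"
  by (induction xs arbitrary: ys) (auto simp: lc_ins)

lemma distinct_foldr: "distinct (map snd ys) \<Longrightarrow> distinct (map snd (foldr ins xs ys))"
proof (induction xs arbitrary: ys)
  case Nil then show ?case by simp
next
  case (Cons x xs) then show ?case by (cases x) (auto intro: distinct_ins)
qed

lemma lc_filter: "lc (filter (\<lambda>(c,w). c \<noteq> 0) ys) u = lc ys u"
  by (induction ys) auto

lemma distinct_filter_snd: "distinct (map snd ys) \<Longrightarrow> distinct (map snd (filter P ys))"
  by (induction ys) auto

lemma lc_nrm: "lc (nrm xs) = lc xs"
  by (rule ext) (simp add: nrm_def lc_filter lc_foldr)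

lemma distinct_nrm: "distinct (map snd (nrm xs))"
  unfolding nrm_def by (rule distinct_filter_snd, rule distinct_foldr) simp

lemma nz_nrm: "(c,w) \<in> set (nrm xs) \<Longrightarrow> c \<noteq> 0"
  by (auto simp: nrm_def)

definition negsum :: "(int \<times> 'v) list \<Rightarrow> int" where
  "negsum ys = sum_list (map (\<lambda>(c,w). if c < 0 then -c else 0) ys)"

lemma negsum_simps[simp]: "negsum [] = 0" "negsum ((c,w)#ys) = (if c < 0 then -c else 0) + negsum ys"
  by (simp_all add: negsum_def)

lemma lc_notin: "w \<notin> set (map snd ys) \<Longrightarrow> lc ys w = 0"
  by (induction ys) auto

lemma negset: "distinct (map snd ys) \<Longrightarrow> (\<Sum>v\<in>{v. lc ys v < 0}. - lc ys v) = negsum ys"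
proof (induction ys)
  case Nil then show ?case by simp
next
  case (Cons p ys)
  obtain c w where p: "p = (c,w)" by (cases p)
  have wn: "w \<notin> set (map snd ys)" and d: "distinct (map snd ys)" using Cons.prems p by auto
  have fin: "finite {v. lc ys v < 0}"
  proof (rule finite_subset)
    show "{v. lc ys v < 0} \<subseteq> set (map snd ys)" using lc_notin by fastforce
  qed simp
  have wnot: "w \<notin> {v. lc ys v < 0}" using lc_notin[OF wn] by simp
  have eq: "{v. lc ((c,w)#ys) v < 0} = (if c < 0 then insert w {v. lc ys v < 0} else {v. lc ys v < 0})"
    using lc_notin[OF wn] by (auto split: if_splits)
  have s: "(\<Sum>v\<in>{v. lc ys v < 0}. - lc ((c,w)#ys) v) = (\<Sum>v\<in>{v. lc ys v < 0}. - lc ys v)"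
    by (rule sum.cong) (use wnot in auto)
  have s2: "(\<Sum>v\<in>{v. lc ys v < 0}. - lc ((c,w)#ys) v) = negsum ys" using s Cons.IH[OF d] by simp
  have lw: "lc ((c,w)#ys) w = c" using lc_notin[OF wn] by simp
  show ?case
  proof (cases "c < 0")
    case True
    then show ?thesis unfolding p eq using s2 fin wnot lw by (simp add: sum.insert)
  next
    case False
    then show ?thesis unfolding p eq using s2 by simp
  qed
qed

lemma degree_RR[simp]: "degree (RR xs r) = r + negsum (nrm xs)"
proof -
  have "degree (RR xs r) = r + (\<Sum>v\<in>{v. lc (nrm xs) v < 0}. - lc (nrm xs) v)"
    by (simp add: degree_def RR_def lc_nrm)
  then show ?thesis using negset[OF distinct_nrm] by simp
qed

lemma lc_g: "distinct (map snd ys) \<Longrightarrow> g 0 = 0 \<Longrightarrow> g (lc ys v) = lc (map (\<lambda>(c,w). (g c, w)) ys) v"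
proof (induction ys)
  case Nil then show ?case by simp
next
  case (Cons p ys)
  obtain c w where p: "p = (c,w)" by (cases p)
  have wn: "w \<notin> set (map snd ys)" using Cons.prems p by auto
  have wn2: "w \<notin> set (map snd (map (\<lambda>(c,w). (g c, w)) ys))" using wn by (auto simp: case_prod_beta)
  show ?case using Cons lc_notin[OF wn] lc_notin[OF wn2] by (auto simp: p)
qed

lemma from_lits_RR: "distinct (map snd ys) \<Longrightarrow> from_lits (lc ys) A = RR ys (A - negsum ys)"
  by (simp add: from_lits_def RR_def negset)

lemma sat_RR[simp]: "cp_sat (RR xs r) =
   RR (map (\<lambda>(c,w). (sgn c * min \<bar>c\<bar> (max (r + negsum (nrm xs)) 0), w)) (nrm xs))
      (r + negsum (nrm xs) - negsum (map (\<lambda>(c,w). (sgn c * min \<bar>c\<bar> (max (r + negsum (nrm xs)) 0), w)) (nrm xs)))"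
proof -
  define D where "D = r + negsum (nrm xs)"
  define g where "g = (\<lambda>c::int. sgn c * min \<bar>c\<bar> (max D 0))"
  have g0: "g 0 = 0" by (simp add: g_def)
  have L: "(\<lambda>v. sgn (lc xs v) * min \<bar>lc xs v\<bar> (max D 0)) = lc (map (\<lambda>(c,w). (g c, w)) (nrm xs))"
  proof (rule ext)
    fix v
    have "g (lc (nrm xs) v) = lc (map (\<lambda>(c,w). (g c, w)) (nrm xs)) v"
      by (rule lc_g[where g=g, OF distinct_nrm g0])
    then show "sgn (lc xs v) * min \<bar>lc xs v\<bar> (max D 0) = lc (map (\<lambda>(c,w). (g c, w)) (nrm xs)) v"
      by (simp add: lc_nrm g_def)
  qed
  have d2: "distinct (map snd (map (\<lambda>(c,w). (g c, w)) (nrm xs)))"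
    using distinct_nrm[of xs] by (simp add: case_prod_beta comp_def)
  have "cp_sat (RR xs r) = from_lits (\<lambda>v. sgn (lc xs v) * min \<bar>lc xs v\<bar> (max D 0)) D"
  proof -
    have deg: "degree (RR xs r) = D" by (simp add: D_def)
    have lh: "lhs (RR xs r) = lc xs" by (simp add: RR_def)
    show ?thesis unfolding cp_sat_def deg lh ..
  qed
  also have "\<dots> = from_lits (lc (map (\<lambda>(c,w). (g c, w)) (nrm xs))) D" by (simp only: L)
  also have "\<dots> = RR (map (\<lambda>(c,w). (g c, w)) (nrm xs)) (D - negsum (map (\<lambda>(c,w). (g c, w)) (nrm xs)))"
    by (rule from_lits_RR[OF d2])
  finally show ?thesis by (simp add: g_def D_def)
qed

lemma nzset: "distinct (map snd ys) \<Longrightarrow> (\<forall>p\<in>set ys. fst p \<noteq> 0) \<Longrightarrow>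
   (\<Sum>v\<in>{v. lc ys v \<noteq> 0}. h (lc ys v)) = sum_list (map (\<lambda>(c,w). h c) ys)"
proof (induction ys)
  case Nil then show ?case by simp
next
  case (Cons p ys)
  obtain c w where p: "p = (c,w)" by (cases p)
  have wn: "w \<notin> set (map snd ys)" and d: "distinct (map snd ys)" using Cons.prems p by auto
  have c0: "c \<noteq> 0" using Cons.prems p by auto
  have fin: "finite {v. lc ys v \<noteq> 0}"
  proof (rule finite_subset)
    show "{v. lc ys v \<noteq> 0} \<subseteq> set (map snd ys)" using lc_notin by fastforce
  qed simp
  have wnot: "w \<notin> {v. lc ys v \<noteq> 0}" using lc_notin[OF wn] by simp
  have eq: "{v. lc ((c,w)#ys) v \<noteq> 0} = insert w {v. lc ys v \<noteq> 0}"
    using lc_notin[OF wn] c0 by (auto split: if_splits)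
  have s: "(\<Sum>v\<in>{v. lc ys v \<noteq> 0}. h (lc ((c,w)#ys) v)) = (\<Sum>v\<in>{v. lc ys v \<noteq> 0}. h (lc ys v))"
    by (rule sum.cong) (use wnot in auto)
  have lw: "lc ((c,w)#ys) w = c" using lc_notin[OF wn] by simp
  show ?case unfolding p eq using s Cons.IH[OF d] Cons.prems fin wnot lw by (simp add: sum.insert)
qed

lemma cons_size_RR[simp]: "cons_size (RR xs r) =
  sum_list (map (\<lambda>(c,w). bitsize (nat \<bar>c\<bar>)) (nrm xs)) + bitsize (nat \<bar>r + negsum (nrm xs)\<bar>)"
proof -
  have "(\<Sum>v\<in>{v. lc (nrm xs) v \<noteq> 0}. bitsize (nat \<bar>lc (nrm xs) v\<bar>)) = sum_list (map (\<lambda>(c,w). bitsize (nat \<bar>c\<bar>)) (nrm xs))"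
    by (rule nzset[OF distinct_nrm]) (auto dest: nz_nrm)
  moreover have "cons_size (RR xs r) = (\<Sum>v\<in>{v. lc (nrm xs) v \<noteq> 0}. bitsize (nat \<bar>lc (nrm xs) v\<bar>)) + bitsize (nat \<bar>degree (RR xs r)\<bar>)"
    unfolding cons_size_def lc_nrm by (simp add: RR_def)
  ultimately show ?thesis by simp
qed

declare bitsize.simps[simp del]
lemma bitsize_simps[simp]: "bitsize 0 = 1" "bitsize 1 = 1"
  "bitsize (numeral (Num.Bit0 k)) = Suc (bitsize (numeral k))"
  "bitsize (numeral (Num.Bit1 k)) = Suc (bitsize (numeral k))"
  by (subst bitsize.simps; simp add: numeral_Bit0_div_2 numeral_Bit1_div_2)+

lemma bitsize_Suc0[simp]: "bitsize (Suc 0) = 1" by (simp add: bitsize.simps)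

lemma RR_eqI: "(\<And>v. lc xs v = lc ys v) \<Longrightarrow> r = s \<Longrightarrow> RR xs r = RR ys s"
  by (simp add: RR_def fun_eq_iff)

lemma lit_axiom_RR[simp]: "lit_axiom l = to_cons ([(1,l)],0)" by (simp add: lit_axiom_def)

datatype 'v instr = IPrem "'v pbc" | IAx "'v lit" | IAdd nat nat | IMul int nat | ISat nat

fun exec1 :: "'v cons list \<Rightarrow> 'v instr \<Rightarrow> 'v cons" where
  "exec1 acc (IPrem p) = to_cons p"
| "exec1 acc (IAx l) = lit_axiom l"
| "exec1 acc (IAdd i j) = cp_add (acc ! i) (acc ! j)"
| "exec1 acc (IMul k i) = cp_mult k (acc ! i)"
| "exec1 acc (ISat i) = cp_sat (acc ! i)"

fun run :: "'v cons list \<Rightarrow> 'v instr list \<Rightarrow> 'v cons list" where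
  "run acc [] = acc"
| "run acc (x#xs) = run (acc @ [exec1 acc x]) xs"

fun okk :: "'v pbc set \<Rightarrow> nat \<Rightarrow> 'v instr \<Rightarrow> bool" where
  "okk G k (IPrem p) = (p \<in> G)"
| "okk G k (IAx l) = True"
| "okk G k (IAdd i j) = (i < k \<and> j < k)"
| "okk G k (IMul c i) = (0 < c \<and> i < k)"
| "okk G k (ISat i) = (i < k)"

fun validk :: "'v pbc set \<Rightarrow> nat \<Rightarrow> 'v instr list \<Rightarrow> bool" where
  "validk G k [] = True"
| "validk G k (x#xs) = (okk G k x \<and> validk G (Suc k) xs)"

lemma exec1_step: assumes "okk G (length acc) x" shows "cp_step G acc (exec1 acc x)"
proof (cases x)
  case (IAdd i j)
  have "acc!i \<in> set acc" "acc!j \<in> set acc" using assms IAdd by simp_all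
  then show ?thesis unfolding cp_step_def IAdd exec1.simps by blast
next
  case (IMul k i)
  have "acc!i \<in> set acc" "k > 0" using assms IMul by simp_all
  then show ?thesis unfolding cp_step_def IMul exec1.simps by blast
next
  case (ISat i)
  have "acc!i \<in> set acc" using assms ISat by simp_all
  then show ?thesis unfolding cp_step_def ISat exec1.simps by blast
qed (use assms in \<open>auto simp: cp_step_def lit_axiom_def\<close>)

lemma cp_step_mono: "set p1 \<subseteq> set p2 \<Longrightarrow> cp_step G p1 c \<Longrightarrow> cp_step G p2 c"
  unfolding cp_step_def by blast

lemma run_prefix: "\<exists>new. run acc xs = acc @ new \<and> length new = length xs"
proof (induction xs arbitrary: acc)
  case Nil then show ?case by simp
next
  case (Cons x xs)
  obtain new where "run (acc @ [exec1 acc x]) xs = (acc @ [exec1 acc x]) @ new" "length new = length xs"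
    using Cons by blast
  then show ?case by (intro exI[of _ "exec1 acc x # new"]) simp
qed

lemma run_valid: "validk G (length acc) xs \<Longrightarrow> length acc \<le> k \<Longrightarrow> k < length (run acc xs) \<Longrightarrow>
   cp_step G (take k (run acc xs)) (run acc xs ! k)"
proof (induction xs arbitrary: acc)
  case Nil then show ?case by simp
next
  case (Cons x xs)
  obtain new where nw: "run (acc @ [exec1 acc x]) xs = (acc @ [exec1 acc x]) @ new"
    using run_prefix by blast
  show ?case
  proof (cases "k = length acc")
    case True
    have "cp_step G acc (exec1 acc x)" using Cons.prems by (intro exec1_step) simp
    then show ?thesis using True nw by (simp add: nth_append)
  next
    case False
    then show ?thesis using Cons.IH[of "acc @ [exec1 acc x]"] Cons.prems by simp
  qed
qed

definition blk :: "'v cons list \<Rightarrow> 'v instr list \<Rightarrow> 'v cons list" where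
  "blk ctx xs = drop (length ctx) (run ctx xs)"

lemma blk_deriv:
  assumes d: "cp_derivation G \<pi>" and sub: "set ctx \<subseteq> set \<pi>" and v: "validk G (length ctx) xs"
  shows "cp_derivation G (\<pi> @ blk ctx xs)"
proof -
  obtain new where nw: "run ctx xs = ctx @ new" using run_prefix by blast
  have bk: "blk ctx xs = new" by (simp add: blk_def nw)
  show ?thesis unfolding cp_derivation_def
  proof (intro allI impI)
    fix i assume i: "i < length (\<pi> @ blk ctx xs)"
    show "cp_step G (take i (\<pi> @ blk ctx xs)) ((\<pi> @ blk ctx xs) ! i)"
    proof (cases "i < length \<pi>")
      case True
      then show ?thesis using d by (simp add: cp_derivation_def nth_append)
    next
      case False
      define k where "k = i - length \<pi>"
      have k: "k < length new" using i False by (simp add: k_def bk)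
      have "cp_step G (take (length ctx + k) (run ctx xs)) (run ctx xs ! (length ctx + k))"
        by (rule run_valid[OF v]) (use k in \<open>auto simp: nw\<close>)
      then have "cp_step G (ctx @ take k new) (new ! k)" by (simp add: nw nth_append)
      then have "cp_step G (\<pi> @ take k new) (new ! k)"
        by (rule cp_step_mono[rotated]) (use sub in auto)
      then show ?thesis using False by (simp add: bk k_def nth_append)
    qed
  qed
qed

lemma deriv_size_append[simp]: "deriv_size (a @ b) = deriv_size a + deriv_size b"
  by (simp add: deriv_size_def)

definition insF :: "nat \<Rightarrow> var instr list" where
  "insF i = [
    IPrem ([(4, Neg (VD (Suc i))), (3, Pos (VD i)), (1, Neg (VA i)), (1, Pos (Y (Suc i))), (1, Neg (X (Suc i)))], 4),
    IAx (Pos (VA i)),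
    IAdd 3 4,
    IAx (Neg (Y (Suc i))),
    IAdd 5 6,
    IAx (Pos (X (Suc i))),
    IAdd 7 8,
    ISat 9,
    IPrem ([(4, Neg (VE (Suc i))), (3, Pos (VE i)), (1, Neg (VB i)), (1, Pos (Z (Suc i))), (1, Neg (Y (Suc i)))], 4),
    IAx (Pos (VB i)),
    IAdd 11 12,
    IAx (Neg (Z (Suc i))),
    IAdd 13 14,
    IAx (Pos (Y (Suc i))),
    IAdd 15 16,
    ISat 17,
    IAdd 0 10,
    ISat 19,
    IAdd 20 18,
    ISat 21,
    IAdd 1 10,
    ISat 23,
    IAdd 24 18,
    ISat 25,
    IAdd 2 10,
    ISat 27,
    IAdd 28 18,
    ISat 29,
    IPrem ([(4, Pos (VF (Suc i))), (3, Neg (VF i)), (1, Pos (VC i)), (1, Neg (Z (Suc i))), (1, Pos (X (Suc i)))], 3),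
    IAx (Pos (Z (Suc i))),
    IAdd 31 32,
    IAx (Neg (X (Suc i))),
    IAdd 33 34,
    ISat 35,
    IPrem ([(4, Pos (VF (Suc i))), (3, Neg (VF i)), (1, Pos (VC i)), (1, Neg (Z (Suc i))), (1, Pos (X (Suc i)))], 3),
    IAx (Neg (VC i)),
    IAdd 37 38,
    IAx (Neg (X (Suc i))),
    IAdd 39 40,
    ISat 41,
    IPrem ([(4, Pos (VF (Suc i))), (3, Neg (VF i)), (1, Pos (VC i)), (1, Neg (Z (Suc i))), (1, Pos (X (Suc i)))], 3),
    IAx (Neg (VC i)),
    IAdd 43 44,
    IAx (Pos (Z (Suc i))),
    IAdd 45 46,
    ISat 47,
    IAdd 36 22,
    ISat 49,
    IAdd 50 26,
    ISat 51,
    IAdd 50 30,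
    ISat 53,
    IPrem ([(4, Neg (VD (Suc i))), (3, Pos (VD i)), (1, Neg (VA i)), (1, Pos (Y (Suc i))), (1, Neg (X (Suc i)))], 4),
    IAx (Neg (VD i)),
    IMul 3 56,
    IAdd 55 57,
    ISat 58,
    IPrem ([(4, Neg (VE (Suc i))), (3, Pos (VE i)), (1, Neg (VB i)), (1, Pos (Z (Suc i))), (1, Neg (Y (Suc i)))], 4),
    IAx (Neg (VE i)),
    IMul 3 61,
    IAdd 60 62,
    ISat 63,
    IAdd 52 59,
    ISat 65,
    IAdd 48 22,
    ISat 67,
    IAdd 66 68,
    ISat 69,
    IAdd 54 64,
    ISat 71,
    IAdd 72 70,
    ISat 73,
    IAdd 42 22,
    ISat 75,
    IAdd 74 76,
    ISat 77,
    IPrem ([(3, Neg (VC (Suc i))), (2, Pos (VC i)), (1, Pos (X (Suc i))), (1, Neg (Z (Suc i)))], 3),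
    IAx (Neg (X (Suc i))),
    IAdd 79 80,
    IAx (Pos (Z (Suc i))),
    IAdd 81 82,
    ISat 83,
    IPrem ([(3, Neg (VC (Suc i))), (2, Pos (VC i)), (1, Pos (X (Suc i))), (1, Neg (Z (Suc i)))], 3),
    IAx (Neg (VC i)),
    IMul 2 86,
    IAdd 85 87,
    ISat 88,
    IAdd 26 84,
    ISat 90,
    IAdd 30 84,
    ISat 92,
    IPrem ([(2, Pos (VA (Suc i))), (2, Neg (VA i)), (1, Neg (X (Suc i))), (1, Pos (Y (Suc i)))], 2),
    IAx (Pos (X (Suc i))),
    IAdd 94 95,
    ISat 96,
    IPrem ([(2, Pos (VA (Suc i))), (2, Neg (VA i)), (1, Neg (X (Suc i))), (1, Pos (Y (Suc i)))], 2),
    IAx (Neg (Y (Suc i))),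
    IAdd 98 99,
    ISat 100,
    IAdd 97 91,
    ISat 102,
    IAdd 101 91,
    ISat 104,
    IAdd 105 89,
    ISat 106,
    IAdd 64 93,
    ISat 108,
    IAdd 109 107,
    ISat 110,
    IAdd 111 103,
    ISat 112,
    IPrem ([(2, Pos (VB (Suc i))), (2, Neg (VB i)), (1, Neg (Y (Suc i))), (1, Pos (Z (Suc i)))], 2),
    IAx (Neg (Z (Suc i))),
    IAdd 114 115,
    ISat 116,
    IPrem ([(2, Pos (VB (Suc i))), (2, Neg (VB i)), (1, Neg (Y (Suc i))), (1, Pos (Z (Suc i)))], 2),
    IAx (Pos (Y (Suc i))),
    IAdd 118 119,
    ISat 120,
    IAdd 117 93,
    ISat 122,
    IAdd 121 93,
    ISat 124,
    IAdd 89 125,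
    ISat 126,
    IAdd 59 91,
    ISat 128,
    IAdd 129 127,
    ISat 130,
    IAdd 131 123,
    ISat 132]"

definition insB0 :: "var instr list" where
  "insB0 = [
    IPrem ([(2, Pos (VF 1)), (1, Neg (Z 1)), (1, Pos (X 1))], 2),
    IAx (Pos (Z 1)),
    IAdd 0 1,
    ISat 2,
    IPrem ([(1, Neg (VD 1)), (1, Pos (Y 1)), (1, Neg (X 1))], 1),
    IAdd 3 4,
    ISat 5,
    IPrem ([(1, Neg (VE 1)), (1, Pos (Z 1)), (1, Neg (Y 1))], 1),
    IAdd 6 7,
    ISat 8,
    IPrem ([(2, Pos (VF 1)), (1, Neg (Z 1)), (1, Pos (X 1))], 2),
    IAx (Neg (X 1)),
    IAdd 10 11,
    ISat 12,
    IAdd 9 13,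
    ISat 14]"

definition insB1 :: "var instr list" where
  "insB1 = [
    IPrem ([(2, Pos (VA 1)), (1, Neg (X 1)), (1, Pos (Y 1))], 2),
    IAx (Pos (X 1)),
    IAdd 0 1,
    ISat 2,
    IPrem ([(1, Neg (VE 1)), (1, Pos (Z 1)), (1, Neg (Y 1))], 1),
    IAdd 3 4,
    ISat 5,
    IPrem ([(1, Neg (VC 1)), (1, Pos (X 1)), (1, Neg (Z 1))], 1),
    IAdd 6 7,
    ISat 8,
    IPrem ([(2, Pos (VA 1)), (1, Neg (X 1)), (1, Pos (Y 1))], 2),
    IAx (Neg (Y 1)),
    IAdd 10 11,
    ISat 12,
    IAdd 9 13,
    ISat 14,
    IAx (Neg (VD 1)),
    IAdd 15 16,
    IPrem ([(2, Pos (VB 1)), (1, Neg (Y 1)), (1, Pos (Z 1))], 2),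
    IAx (Pos (Y 1)),
    IAdd 18 19,
    ISat 20,
    IPrem ([(1, Neg (VC 1)), (1, Pos (X 1)), (1, Neg (Z 1))], 1),
    IAdd 21 22,
    ISat 23,
    IPrem ([(1, Neg (VD 1)), (1, Pos (Y 1)), (1, Neg (X 1))], 1),
    IAdd 24 25,
    ISat 26,
    IPrem ([(2, Pos (VB 1)), (1, Neg (Y 1)), (1, Pos (Z 1))], 2),
    IAx (Neg (Z 1)),
    IAdd 28 29,
    ISat 30,
    IAdd 27 31,
    ISat 32,
    IAx (Neg (VE 1)),
    IAdd 33 34]"

definition insFin :: "nat \<Rightarrow> var instr list" where
  "insFin n = [
    IPrem ([(1, Pos (VD n))], 1),
    IAdd 0 1,
    IPrem ([(1, Pos (VE n))], 1),
    IAdd 2 3]"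

definition insP :: "nat \<Rightarrow> var instr list" where "insP i = take 76 (insF i)"

definition Pc :: "nat \<Rightarrow> var cons" where
  "Pc i = to_cons ([(1, Neg (VD i)), (1, Neg (VE i)), (1, Pos (VF i))], 1)"
definition Qc :: "nat \<Rightarrow> var cons" where
  "Qc i = to_cons ([(1, Neg (VD i)), (1, Neg (VE i)), (1, Neg (VC i)), (1, Pos (VA i))], 1)"
definition Rc :: "nat \<Rightarrow> var cons" where
  "Rc i = to_cons ([(1, Neg (VD i)), (1, Neg (VE i)), (1, Neg (VC i)), (1, Pos (VB i))], 1)"

lemma B0_eval: "blk [] insB0 ! 15 = Pc 1 \<and> deriv_size (blk [] insB0) = 65 \<and> length (blk [] insB0) = 16"
  apply (simp add: insB0_def blk_def Pc_def to_cons_RR deriv_size_def nrm_def)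
  by (intro conjI RR_eqI) auto

lemma B1_eval: "blk [] insB1 ! 17 = Qc 1 \<and> blk [] insB1 ! 35 = Rc 1 \<and>
   deriv_size (blk [] insB1) = 144 \<and> length (blk [] insB1) = 36"
  apply (simp add: insB1_def blk_def Qc_def Rc_def to_cons_RR deriv_size_def nrm_def)
  by (intro conjI RR_eqI) auto

lemma Fin_eval: "blk [Pc n] (insFin n) ! 3 = to_cons (unit_pbc (VF n)) \<and>
   deriv_size (blk [Pc n] (insFin n)) = 9 \<and> length (blk [Pc n] (insFin n)) = 4"
  apply (simp add: insFin_def blk_def Pc_def unit_pbc_def to_cons_RR deriv_size_def nrm_def)
  by (intro conjI RR_eqI) auto

lemma F_eval: "blk [Pc i, Qc i, Rc i] (insF i) ! 75 = Pc (Suc i) \<and> blk [Pc i, Qc i, Rc i] (insF i) ! 110 = Qc (Suc i) \<and>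
  blk [Pc i, Qc i, Rc i] (insF i) ! 130 = Rc (Suc i) \<and>
  deriv_size (blk [Pc i, Qc i, Rc i] (insF i)) = 724 \<and> length (blk [Pc i, Qc i, Rc i] (insF i)) = 131"
  apply (simp add: insF_def blk_def Pc_def Qc_def Rc_def to_cons_RR deriv_size_def nrm_def)
  by (intro conjI RR_eqI) auto

lemma run_take: "run acc (take m xs) = take (length acc + m) (run acc xs)"
proof (induction xs arbitrary: acc m)
  case Nil then show ?case by simp
next
  case (Cons x xs)
  obtain new where nw: "run (acc @ [exec1 acc x]) xs = (acc @ [exec1 acc x]) @ new"
    using run_prefix by blast
  show ?case
  proof (cases m)
    case 0 then show ?thesis using nw by simp
  next
    case (Suc m')
    then show ?thesis using Cons.IH[of "acc @ [exec1 acc x]" m'] by simp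
  qed
qed

lemma blk_take: "blk ctx (take m xs) = take m (blk ctx xs)"
  by (simp add: blk_def run_take drop_take)

lemma deriv_size_take: "deriv_size (take m xs) \<le> deriv_size xs"
proof -
  have "deriv_size xs = deriv_size (take m xs) + deriv_size (drop m xs)"
    by (simp flip: deriv_size_append)
  then show ?thesis by simp
qed

lemma P_eval: "blk [Pc i, Qc i, Rc i] (insP i) ! 75 = Pc (Suc i) \<and>
  deriv_size (blk [Pc i, Qc i, Rc i] (insP i)) \<le> 724 \<and> length (blk [Pc i, Qc i, Rc i] (insP i)) = 76"
  using F_eval[of i] deriv_size_take[of 76 "blk [Pc i, Qc i, Rc i] (insF i)"]
  by (simp add: insP_def blk_take)

lemma mem_Arec1: "1 \<le> i \<Longrightarrow> i \<le> n - 2 \<Longrightarrow>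
  ([(3, Neg (a (Suc i))), (2, Pos (a i)), (1, Pos (u (Suc i))), (1, Neg (v (Suc i)))], 3) \<in> spec n u v a d"
  unfolding spec_def by auto
lemma mem_Arec2: "1 \<le> i \<Longrightarrow> i \<le> n - 2 \<Longrightarrow>
  ([(2, Pos (a (Suc i))), (2, Neg (a i)), (1, Neg (u (Suc i))), (1, Pos (v (Suc i)))], 2) \<in> spec n u v a d"
  unfolding spec_def by auto
lemma mem_Drec1: "1 \<le> i \<Longrightarrow> i \<le> n - 1 \<Longrightarrow>
  ([(4, Neg (d (Suc i))), (3, Pos (d i)), (1, Neg (a i)), (1, Pos (v (Suc i))), (1, Neg (u (Suc i)))], 4) \<in> spec n u v a d"
  unfolding spec_def by auto
lemma mem_Drec2: "1 \<le> i \<Longrightarrow> i \<le> n - 1 \<Longrightarrow>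
  ([(4, Pos (d (Suc i))), (3, Neg (d i)), (1, Pos (a i)), (1, Neg (v (Suc i))), (1, Pos (u (Suc i)))], 3) \<in> spec n u v a d"
  unfolding spec_def by auto
lemma mem_A1a: "2 \<le> n \<Longrightarrow> ([(1, Neg (a (Suc 0))), (1, Pos (u (Suc 0))), (1, Neg (v (Suc 0)))], 1) \<in> spec n u v a d"
  unfolding spec_def by auto
lemma mem_A1b: "2 \<le> n \<Longrightarrow> ([(2, Pos (a (Suc 0))), (1, Neg (u (Suc 0))), (1, Pos (v (Suc 0)))], 2) \<in> spec n u v a d"
  unfolding spec_def by auto
lemma mem_D1a: "([(1, Neg (d (Suc 0))), (1, Pos (v (Suc 0))), (1, Neg (u (Suc 0)))], 1) \<in> spec n u v a d"
  unfolding spec_def by auto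
lemma mem_D1b: "([(2, Pos (d (Suc 0))), (1, Neg (v (Suc 0))), (1, Pos (u (Suc 0)))], 2) \<in> spec n u v a d"
  unfolding spec_def by auto

lemmas mem_all =
  mem_Arec1[where u=X and v=Y and a=VA and d=VD]
  mem_Arec2[where u=X and v=Y and a=VA and d=VD]
  mem_Drec1[where u=X and v=Y and a=VA and d=VD]
  mem_Drec2[where u=X and v=Y and a=VA and d=VD]
  mem_A1a[where u=X and v=Y and a=VA and d=VD]
  mem_A1b[where u=X and v=Y and a=VA and d=VD]
  mem_D1a[where u=X and v=Y and a=VA and d=VD]
  mem_D1b[where u=X and v=Y and a=VA and d=VD]
  mem_Arec1[where u=Y and v=Z and a=VB and d=VE]
  mem_Arec2[where u=Y and v=Z and a=VB and d=VE]
  mem_Drec1[where u=Y and v=Z and a=VB and d=VE]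
  mem_Drec2[where u=Y and v=Z and a=VB and d=VE]
  mem_A1a[where u=Y and v=Z and a=VB and d=VE]
  mem_A1b[where u=Y and v=Z and a=VB and d=VE]
  mem_D1a[where u=Y and v=Z and a=VB and d=VE]
  mem_D1b[where u=Y and v=Z and a=VB and d=VE]
  mem_Arec1[where u=X and v=Z and a=VC and d=VF]
  mem_Arec2[where u=X and v=Z and a=VC and d=VF]
  mem_Drec1[where u=X and v=Z and a=VC and d=VF]
  mem_Drec2[where u=X and v=Z and a=VC and d=VF]
  mem_A1a[where u=X and v=Z and a=VC and d=VF]
  mem_A1b[where u=X and v=Z and a=VC and d=VF]
  mem_D1a[where u=X and v=Z and a=VC and d=VF]
  mem_D1b[where u=X and v=Z and a=VC and d=VF]

lemma F_valid: "1 \<le> i \<Longrightarrow> i \<le> n - 2 \<Longrightarrow> validk (trans_premises n) 3 (insF i)"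
  by (simp add: insF_def trans_premises_def mem_all)

lemma P_valid: "1 \<le> i \<Longrightarrow> i \<le> n - 1 \<Longrightarrow> validk (trans_premises n) 3 (insP i)"
  by (simp add: insP_def insF_def trans_premises_def mem_all)

lemma B0_valid: "validk (trans_premises n) 0 insB0"
  by (simp add: insB0_def trans_premises_def mem_all)

lemma B1_valid: "2 \<le> n \<Longrightarrow> validk (trans_premises n) 0 insB1"
  by (simp add: insB1_def trans_premises_def mem_all)

lemma Fin_valid: "validk (trans_premises n) 1 (insFin n)"
  by (simp add: insFin_def trans_premises_def unit_pbc_def)

fun fb :: "nat \<Rightarrow> var cons list" where
  "fb 0 = blk [] insB0 @ blk [] insB1"
| "fb (Suc k) = fb k @ blk [Pc (Suc k), Qc (Suc k), Rc (Suc k)] (insF (Suc k))"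

lemma nth_in_blk: "k < length B \<Longrightarrow> B ! k = c \<Longrightarrow> c \<in> set (A @ B)"
  by auto

lemma fb_props:
  assumes "k + 2 \<le> n"
  shows "cp_derivation (trans_premises n) (fb k) \<and> Pc (Suc k) \<in> set (fb k) \<and> Qc (Suc k) \<in> set (fb k) \<and>
         Rc (Suc k) \<in> set (fb k) \<and> deriv_size (fb k) = 209 + 724 * k"
  using assms
proof (induction k)
  case 0
  have d0: "cp_derivation (trans_premises n) ([] @ blk [] insB0)"
    by (rule blk_deriv) (auto simp: cp_derivation_def B0_valid)
  have d1: "cp_derivation (trans_premises n) (([] @ blk [] insB0) @ blk [] insB1)"
    by (rule blk_deriv[OF d0]) (use 0 B1_valid in auto)
  show ?case
    using d1 B0_eval B1_eval nth_in_blk[of 17 "blk [] insB1" "Qc 1" "blk [] insB0"]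
      nth_in_blk[of 35 "blk [] insB1" "Rc 1" "blk [] insB0"] nth_in_blk[of 15 "blk [] insB0" "Pc 1" "[]"]
    by auto
next
  case (Suc k)
  then have IH: "cp_derivation (trans_premises n) (fb k)" "Pc (Suc k) \<in> set (fb k)" "Qc (Suc k) \<in> set (fb k)"
         "Rc (Suc k) \<in> set (fb k)" "deriv_size (fb k) = 209 + 724 * k" by auto
  have v: "validk (trans_premises n) (length [Pc (Suc k), Qc (Suc k), Rc (Suc k)]) (insF (Suc k))"
    using F_valid[of "Suc k" n] Suc.prems by (simp add: numeral_3_eq_3)
  have d: "cp_derivation (trans_premises n) (fb (Suc k))"
    using blk_deriv[OF IH(1) _ v] IH(2-4) by simp
  let ?B = "blk [Pc (Suc k), Qc (Suc k), Rc (Suc k)] (insF (Suc k))"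
  have m: "Pc (Suc (Suc k)) \<in> set (fb k @ ?B)" "Qc (Suc (Suc k)) \<in> set (fb k @ ?B)" "Rc (Suc (Suc k)) \<in> set (fb k @ ?B)"
    using nth_in_blk[of 75 ?B "Pc (Suc (Suc k))" "fb k"] nth_in_blk[of 110 ?B "Qc (Suc (Suc k))" "fb k"]
      nth_in_blk[of 130 ?B "Rc (Suc (Suc k))" "fb k"] F_eval[of "Suc k"] by auto
  show ?case using d m IH(5) F_eval[of "Suc k"] by simp
qed

theorem lemma14:
  "\<exists>C::nat. \<forall>n\<ge>1. \<exists>\<pi>::var cons list.
     cp_derivation (trans_premises n) \<pi> \<and> \<pi> \<noteq> [] \<and>
     last \<pi> = to_cons (unit_pbc (VF n)) \<and>
     deriv_size \<pi> \<le> C * n"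
proof (intro exI[of _ 724] allI impI)
  fix n :: nat assume n1: "1 \<le> n"
  have fin: "cp_derivation (trans_premises n) (\<pi> @ blk [Pc n] (insFin n)) \<and>
             \<pi> @ blk [Pc n] (insFin n) \<noteq> [] \<and> last (\<pi> @ blk [Pc n] (insFin n)) = to_cons (unit_pbc (VF n)) \<and>
             deriv_size (\<pi> @ blk [Pc n] (insFin n)) = deriv_size \<pi> + 9"
    if "cp_derivation (trans_premises n) \<pi>" "Pc n \<in> set \<pi>" for \<pi>
  proof -
    have "cp_derivation (trans_premises n) (\<pi> @ blk [Pc n] (insFin n))"
      by (rule blk_deriv) (use that Fin_valid in auto)
    moreover have "last (blk [Pc n] (insFin n)) = to_cons (unit_pbc (VF n))"
    proof -
      have l: "length (blk [Pc n] (insFin n)) = 4" and e: "blk [Pc n] (insFin n) ! 3 = to_cons (unit_pbc (VF n))"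
        using Fin_eval[of n] by auto
      have "blk [Pc n] (insFin n) \<noteq> []" using l by auto
      then show ?thesis using l e by (simp add: last_conv_nth)
    qed
    moreover have "blk [Pc n] (insFin n) \<noteq> []" using Fin_eval[of n] by auto
    ultimately show ?thesis using Fin_eval[of n] by simp
  qed
  show "\<exists>\<pi>::var cons list. cp_derivation (trans_premises n) \<pi> \<and> \<pi> \<noteq> [] \<and>
     last \<pi> = to_cons (unit_pbc (VF n)) \<and> deriv_size \<pi> \<le> 724 * n"
  proof (cases "n = 1")
    case True
    have d0: "cp_derivation (trans_premises n) ([] @ blk [] insB0)"
      by (rule blk_deriv) (auto simp: cp_derivation_def B0_valid)
    have "Pc n \<in> set ([] @ blk [] insB0)"
      using True B0_eval nth_in_blk[of 15 "blk [] insB0" "Pc 1" "[]"] by auto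
    then show ?thesis using fin[OF d0] B0_eval True by (intro exI[of _ "([] @ blk [] insB0) @ blk [Pc n] (insFin n)"]) auto
  next
    case False
    define m where "m = n - 2"
    have nm: "n = m + 2" using False n1 by (simp add: m_def)
    have F: "cp_derivation (trans_premises n) (fb m)" "Pc (Suc m) \<in> set (fb m)" "Qc (Suc m) \<in> set (fb m)"
       "Rc (Suc m) \<in> set (fb m)" "deriv_size (fb m) = 209 + 724 * m"
      using fb_props[of m n] nm by auto
    let ?B = "blk [Pc (Suc m), Qc (Suc m), Rc (Suc m)] (insP (Suc m))"
    have v: "validk (trans_premises n) (length [Pc (Suc m), Qc (Suc m), Rc (Suc m)]) (insP (Suc m))"
      using P_valid[of "Suc m" n] nm by (simp add: numeral_3_eq_3)
    have d: "cp_derivation (trans_premises n) (fb m @ ?B)"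
      using blk_deriv[OF F(1) _ v] F(2-4) by simp
    have "Pc n \<in> set (fb m @ ?B)"
      using nth_in_blk[of 75 ?B "Pc (Suc (Suc m))" "fb m"] P_eval[of "Suc m"] nm by auto
    moreover have "deriv_size (fb m @ ?B) + 9 \<le> 724 * n"
      using F(5) P_eval[of "Suc m"] nm by simp
    ultimately show ?thesis using fin[OF d] by (intro exI[of _ "(fb m @ ?B) @ blk [Pc n] (insFin n)"]) auto
  qed
qed

end
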